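(* Let $\Theta\subset\mathbb R^d$ and let $A:\Theta\to S^d_+(\mathbb R)$ be $L$-Lipschitz with respect to the Frobenius norm. Then for all $\beta>0$, $v\in\mathbb R^d$ and $\theta_1,\theta_2\in\Theta$, \[ \|v\|^2_{A_\beta(\theta_2)}\le\big(3+L\beta^{-1}|\theta_1-\theta_2|\big)\,\|v\|^2_{A_\beta(\theta_1)}. \]
   Context: $S^d_+(\mathbb R)$ is the set of real symmetric positive semidefinite $d\times d$ matrices. For $A\in S^d_+(\mathbb R)$ with spectral decomposition $A=\sum_{j=1}^d\lambda_j u_ju_j^T$ (orthonormal eigenvectors $u_j$) and $\beta>0$, define $A_\beta=\sum_{j=1}^d\max(\lambda_j,\beta)u_ju_j^T$ (eigenvalues below $\beta$ replaced by $\beta$). For a matrix $M\in S^d_+(\mathbb R)$ and $v\in\mathbb R^d$, $\|v\|_M=\sqrt{\langle Mv,v\rangle}$. $|\cdot|$ is the Euclidean norm. *)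

theory Defs
  imports "HOL-Analysis.Analysis"
begin

definition psd :: "real^'d^'d \<Rightarrow> bool" where
  "psd A \<longleftrightarrow> transpose A = A \<and> (\<forall>x. 0 \<le> x \<bullet> (A *v x))"

definition frob_norm :: "real^'d^'d \<Rightarrow> real" where
  "frob_norm A = sqrt (\<Sum>i\<in>UNIV. \<Sum>j\<in>UNIV. (A $ i $ j)\<^sup>2)"

definition outer :: "real^'d \<Rightarrow> real^'d^'d" where
  "outer u = (\<chi> i j. u $ i * u $ j)"

definition orthonormal_family :: "('d \<Rightarrow> real^'d) \<Rightarrow> bool" where
  "orthonormal_family u \<longleftrightarrow> (\<forall>i j. u i \<bullet> u j = (if i = j then 1 else 0))"

text \<open>A_beta: replace eigenvalues below beta by beta in a spectral decomposition
  A = sum_j lambda_j u_j u_j^T (well defined, independent of the decomposition).\<close>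
definition clamp :: "real \<Rightarrow> real^'d^'d \<Rightarrow> real^'d^'d" where
  "clamp \<beta> A = (SOME B. \<exists>u lam. orthonormal_family u \<and>
      A = (\<Sum>j\<in>UNIV. lam j *\<^sub>R outer (u j)) \<and>
      B = (\<Sum>j\<in>UNIV. max (lam j) \<beta> *\<^sub>R outer (u j)))"

definition mnorm_sq :: "real^'d^'d \<Rightarrow> real^'d \<Rightarrow> real" where
  "mnorm_sq M v = (M *v v) \<bullet> v"

end

theory Submission
  imports Defs
begin


lemma quad_zero:
  fixes a b :: real
  assumes "\<And>t. a * t + b * t^2 \<le> 0"
  shows "a = 0"
proof (rule ccontr)
  assume "a \<noteq> 0"
  define k where "k = \<bar>b\<bar> + 1"
  have k: "k > 0" by (simp add: k_def)
  define t where "t = a / (2 * k)"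
  have "b * t^2 \<ge> - k * t^2"
  proof -
    have "0 \<le> b + k" by (auto simp: k_def)
    then have "0 \<le> (b + k) * t^2" by simp
    then show ?thesis by (simp add: distrib_right)
  qed
  moreover have "a * t - k * t^2 = a^2 / (4 * k)"
    using k by (simp add: t_def power2_eq_square field_simps)
  moreover have "a^2 / (4*k) > 0" using k \<open>a \<noteq> 0\<close> by simp
  ultimately show False using assms[of t] by linarith
qed


lemma sym_inner:
  fixes A :: "real^'d^'d"
  assumes "transpose A = A"
  shows "(A *v x) \<bullet> y = x \<bullet> (A *v y)"
proof -
  have "A *v x = x v* A" using vector_transpose_matrix[of x A] assms by simp
  then show ?thesis by (simp add: dot_lmul_matrix)
qed

lemma eigen_in_subspace:
  fixes A :: "real^'d^'d" and S :: "(real^'d) set"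
  assumes sym: "transpose A = A"
    and ne: "z \<noteq> 0" "\<forall>s\<in>S. s \<bullet> z = 0"
    and inv: "\<And>x. \<forall>s\<in>S. s \<bullet> x = 0 \<Longrightarrow> \<forall>s\<in>S. s \<bullet> (A *v x) = 0"
  shows "\<exists>x0 \<mu>. norm x0 = 1 \<and> (\<forall>s\<in>S. s \<bullet> x0 = 0) \<and> A *v x0 = \<mu> *\<^sub>R x0"
proof -
  define W where "W = {x. \<forall>s\<in>S. s \<bullet> x = 0}"
  define K where "K = sphere (0::real^'d) 1 \<inter> W"
  have W_eq: "W = (\<Inter>s\<in>S. {x. s \<bullet> x = 0})" by (auto simp: W_def)
  have "closed W" unfolding W_eq by (intro closed_INT ballI closed_hyperplane)
  then have "compact K" unfolding K_def by (simp add: compact_Int_closed)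
  have "z /\<^sub>R norm z \<in> K" using ne by (auto simp: K_def W_def inner_scaleR_right)
  then have "K \<noteq> {}" by auto
  define f where "f x = x \<bullet> (A *v x)" for x
  have "continuous_on K f" unfolding f_def
    by (intro continuous_intros linear_continuous_on matrix_vector_mul_linear bounded_linear_inner_right) 
  then obtain x0 where x0: "x0 \<in> K" "\<And>y. y \<in> K \<Longrightarrow> f y \<le> f x0"
    using continuous_attains_sup[OF \<open>compact K\<close> \<open>K \<noteq> {}\<close>] by blast
  define \<mu> where "\<mu> = f x0"
  have nx0: "norm x0 = 1" "x0 \<in> W" using x0 by (auto simp: K_def)
  have bound: "f y \<le> \<mu> * (y \<bullet> y)" if "y \<in> W" for y
  proof (cases "y = 0")
    case True then show ?thesis by (simp add: f_def \<mu>_def)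
  next
    case False
    have "y /\<^sub>R norm y \<in> K" using that False by (auto simp: K_def W_def inner_scaleR_right)
    then have "f (y /\<^sub>R norm y) \<le> \<mu>" using x0 by (simp add: \<mu>_def)
    moreover have "f (y /\<^sub>R norm y) = f y / (norm y)^2"
      by (simp add: f_def matrix_vector_mult_scaleR inner_scaleR_left inner_scaleR_right power2_eq_square field_simps)
    moreover have "(norm y)^2 > 0" using False by simp
    ultimately have "f y \<le> \<mu> * (norm y)^2" by (simp add: divide_le_eq mult.commute)
    then show ?thesis by (simp add: power2_norm_eq_inner)
  qed
  define w where "w = A *v x0 - \<mu> *\<^sub>R x0"
  have x0x0: "x0 \<bullet> x0 = 1" using nx0 by (metis norm_eq_1 norm_eq_sqrt_inner)
  have wW: "w \<in> W" using nx0(2) inv[of x0] by (auto simp: W_def w_def inner_diff_right inner_scaleR_right)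
  have wx0: "w \<bullet> x0 = 0"
    using x0x0 by (simp add: w_def inner_diff_left \<mu>_def f_def inner_commute inner_diff_right)
  have "\<And>t. (2 * (w \<bullet> (A *v x0))) * t + (w \<bullet> (A *v w) - \<mu> * (w \<bullet> w)) * t^2 \<le> 0"
  proof -
    fix t :: real
    have "x0 + t *\<^sub>R w \<in> W" using nx0(2) wW by (auto simp: W_def inner_add_right inner_scaleR_right)
    then have "f (x0 + t *\<^sub>R w) \<le> \<mu> * ((x0 + t *\<^sub>R w) \<bullet> (x0 + t *\<^sub>R w))" by (rule bound)
    moreover have "f (x0 + t *\<^sub>R w) = \<mu> + 2 * t * (w \<bullet> (A *v x0)) + t^2 * (w \<bullet> (A *v w))"
      using sym_inner[OF sym, of w x0]
      by (simp add: f_def \<mu>_def matrix_vector_mult_add_rdistrib matrix_vector_right_distrib matrix_vector_mult_scaleR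
         inner_add_left inner_add_right inner_scaleR_left inner_scaleR_right power2_eq_square inner_commute algebra_simps)
    moreover have "(x0 + t *\<^sub>R w) \<bullet> (x0 + t *\<^sub>R w) = 1 + t^2 * (w \<bullet> w)"
      using x0x0 wx0 by (simp add: inner_add_left inner_add_right inner_scaleR_left inner_scaleR_right power2_eq_square inner_commute algebra_simps)
    ultimately have "\<mu> + 2 * t * (w \<bullet> (A *v x0)) + t^2 * (w \<bullet> (A *v w)) \<le> \<mu> * (1 + t^2 * (w \<bullet> w))"
      by metis
    then show "(2 * (w \<bullet> (A *v x0))) * t + (w \<bullet> (A *v w) - \<mu> * (w \<bullet> w)) * t^2 \<le> 0"
      by (simp add: algebra_simps)
  qed
  then have "2 * (w \<bullet> (A *v x0)) = 0" by (rule quad_zero)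
  moreover have "w \<bullet> (A *v x0) = w \<bullet> w"
    using wx0 by (simp add: w_def inner_diff_left inner_diff_right inner_scaleR_right inner_scaleR_left inner_commute)
  ultimately have "w = 0" by simp
  then show ?thesis using nx0 by (auto simp: w_def W_def)
qed


lemma outer_mult: "outer u *v x = (u \<bullet> x) *\<^sub>R u"
  by (simp add: vec_eq_iff matrix_vector_mult_def outer_def inner_vec_def sum_distrib_left mult_ac)

lemma sum_mat_mult:
  fixes M :: "'i \<Rightarrow> real^'d^'d"
  shows "(\<Sum>j\<in>F. c j *\<^sub>R M j) *v x = (\<Sum>j\<in>F. c j *\<^sub>R (M j *v x))"
proof (induction F rule: infinite_finite_induct)
  case (insert j F)
  then show ?case by (simp add: matrix_vector_mult_add_rdistrib scaleR_matrix_vector_assoc)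
qed auto

lemma sum_outer_mult:
  "(\<Sum>j\<in>UNIV. c j *\<^sub>R outer (u j)) *v x = (\<Sum>j\<in>UNIV. (c j * (u j \<bullet> x)) *\<^sub>R u j)"
  by (simp add: sum_mat_mult outer_mult)

lemma onf_span:
  fixes u :: "'d \<Rightarrow> real^'d"
  assumes "orthonormal_family u"
  shows "x = (\<Sum>j\<in>UNIV. (u j \<bullet> x) *\<^sub>R u j)"
proof -
  have inj: "inj u"
  proof (rule injI)
    fix i j assume "u i = u j"
    then have "u i \<bullet> u j = 1" using assms[unfolded orthonormal_family_def, rule_format, of j j] by simp
    then show "i = j" using assms[unfolded orthonormal_family_def, rule_format, of i j] by (auto split: if_splits)
  qed
  have po: "pairwise orthogonal (range u)"
    using assms by (auto simp: pairwise_def orthogonal_def orthonormal_family_def)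
  have "0 \<notin> range u"
    using assms by (auto simp: orthonormal_family_def) (metis inner_zero_left zero_neq_one)
  then have ind: "independent (range u)" using po pairwise_orthogonal_independent by blast
  have "card (range u) = CARD('d)" using inj by (simp add: card_image)
  then have "UNIV \<subseteq> span (range u)"
    by (intro card_ge_dim_independent ind) auto
  define y where "y = x - (\<Sum>j\<in>UNIV. (u j \<bullet> x) *\<^sub>R u j)"
  have "u i \<bullet> y = 0" for i
  proof -
    have "u i \<bullet> (\<Sum>j\<in>UNIV. (u j \<bullet> x) *\<^sub>R u j) = (\<Sum>j\<in>UNIV. (u j \<bullet> x) * (u i \<bullet> u j))"
      by (simp add: inner_sum_right inner_scaleR_right)
    also have "\<dots> = (\<Sum>j\<in>UNIV. if j = i then u i \<bullet> x else 0)"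
      using assms by (intro sum.cong) (auto simp: orthonormal_family_def)
    also have "\<dots> = u i \<bullet> x" by simp
    finally show ?thesis by (simp add: y_def inner_diff_right)
  qed
  then have "orthogonal y z" if "z \<in> range u" for z using that by (auto simp: orthogonal_def inner_commute)
  then have "orthogonal y y" using orthogonal_to_span \<open>UNIV \<subseteq> span (range u)\<close> by blast
  then have "y = 0" by (simp add: orthogonal_def)
  then show ?thesis by (simp add: y_def)
qed

lemma eig_sets:
  fixes A :: "real^'d^'d"
  assumes sym: "transpose A = A"
  shows "k \<le> CARD('d) \<Longrightarrow> \<exists>S. finite S \<and> card S = k \<and> (\<forall>x\<in>S. norm x = 1 \<and> (\<exists>\<mu>. A *v x = \<mu> *\<^sub>R x))
      \<and> (\<forall>x\<in>S. \<forall>y\<in>S. x \<noteq> y \<longrightarrow> x \<bullet> y = 0)"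
proof (induction k)
  case 0
  then show ?case by (intro exI[of _ "{}"]) auto
next
  case (Suc k)
  then obtain S where S: "finite S" "card S = k" "\<forall>x\<in>S. norm x = 1 \<and> (\<exists>\<mu>. A *v x = \<mu> *\<^sub>R x)"
      "\<forall>x\<in>S. \<forall>y\<in>S. x \<noteq> y \<longrightarrow> x \<bullet> y = 0" by auto
  have "dim S \<le> card S" using dim_le_card[OF span_superset S(1)] .
  then have "dim S < DIM(real^'d)" using Suc.prems S(2) by simp
  then obtain z where z: "z \<noteq> 0" "\<And>y. y \<in> span S \<Longrightarrow> orthogonal z y"
    using orthogonal_to_subspace_exists by blast
  have zS: "\<forall>s\<in>S. s \<bullet> z = 0" using z(2) span_base by (fastforce simp: orthogonal_def inner_commute)
  have inv: "\<forall>s\<in>S. s \<bullet> (A *v x) = 0" if "\<forall>s\<in>S. s \<bullet> x = 0" for x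
  proof
    fix s assume "s \<in> S"
    then obtain \<mu> where "A *v s = \<mu> *\<^sub>R s" using S(3) by auto
    then have "s \<bullet> (A *v x) = \<mu> * (s \<bullet> x)" using sym_inner[OF sym, of s x] by (simp add: inner_scaleR_left)
    then show "s \<bullet> (A *v x) = 0" using that \<open>s \<in> S\<close> by simp
  qed
  obtain x0 \<mu> where x0: "norm x0 = 1" "\<forall>s\<in>S. s \<bullet> x0 = 0" "A *v x0 = \<mu> *\<^sub>R x0"
    using eigen_in_subspace[OF sym z(1) zS inv] by blast
  have "x0 \<notin> S"
  proof
    assume "x0 \<in> S" then have "x0 \<bullet> x0 = 0" using x0(2) by blast
    then show False using x0(1) by simp
  qed
  show ?case
    apply (intro exI[of _ "insert x0 S"])
    using S x0 \<open>x0 \<notin> S\<close> by (auto simp: inner_commute)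
qed

lemma spectral:
  fixes A :: "real^'d^'d"
  assumes sym: "transpose A = A"
  shows "\<exists>u lam. orthonormal_family u \<and> A = (\<Sum>j\<in>UNIV. lam j *\<^sub>R outer (u j))"
proof -
  obtain S where S: "finite S" "card S = CARD('d)" "\<forall>x\<in>S. norm x = 1 \<and> (\<exists>\<mu>. A *v x = \<mu> *\<^sub>R x)"
      "\<forall>x\<in>S. \<forall>y\<in>S. x \<noteq> y \<longrightarrow> x \<bullet> y = 0"
    using eig_sets[OF sym, of "CARD('d)"] by auto
  obtain u where u: "bij_betw u (UNIV::'d set) S"
    using finite_same_card_bij[of "UNIV::'d set" S] S by auto
  have onf: "orthonormal_family u"
    unfolding orthonormal_family_def
  proof (intro allI)
    fix i j
    show "u i \<bullet> u j = (if i = j then 1 else 0)"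
    proof (cases "i = j")
      case True
      have "norm (u i) = 1" using S(3) u bij_betwE by blast
      then show ?thesis using True by (metis norm_eq_1)
    next
      case False
      then have "u i \<noteq> u j" using u by (metis bij_betw_def injD)
      then show ?thesis using False S(4) u bij_betwE by (metis (full_types) UNIV_I)
    qed
  qed
  define lam where "lam j = (SOME \<mu>. A *v u j = \<mu> *\<^sub>R u j)" for j
  have eig: "A *v u j = lam j *\<^sub>R u j" for j
  proof -
    have "\<exists>\<mu>. A *v u j = \<mu> *\<^sub>R u j" using S(3) u bij_betwE by blast
    then show ?thesis unfolding lam_def by (rule someI_ex)
  qed
  have "A = (\<Sum>j\<in>UNIV. lam j *\<^sub>R outer (u j))"
    unfolding matrix_eq
  proof
    fix x
    have "A *v x = A *v (\<Sum>j\<in>UNIV. (u j \<bullet> x) *\<^sub>R u j)" using onf_span[OF onf, of x] by simp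
    also have "\<dots> = (\<Sum>j\<in>UNIV. (u j \<bullet> x) *\<^sub>R (A *v u j))"
      by (simp only: linear_sum[OF matrix_vector_mul_linear[of A]] linear_scale[OF matrix_vector_mul_linear[of A]])
    also have "\<dots> = (\<Sum>j\<in>UNIV. lam j *\<^sub>R outer (u j)) *v x"
      by (simp add: sum_outer_mult eig mult.commute)
    finally show "A *v x = (\<Sum>j\<in>UNIV. lam j *\<^sub>R outer (u j)) *v x" .
  qed
  then show ?thesis using onf by blast
qed


lemma quad_form: "mnorm_sq (\<Sum>j\<in>UNIV. c j *\<^sub>R outer (u j)) v = (\<Sum>j\<in>UNIV. c j * (u j \<bullet> v)^2)"
  by (simp add: mnorm_sq_def sum_outer_mult inner_sum_left power2_eq_square mult_ac)

lemma parseval: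
  assumes "orthonormal_family u"
  shows "v \<bullet> v = (\<Sum>j\<in>UNIV. (u j \<bullet> v)^2)"
proof -
  have "v \<bullet> v = (\<Sum>j\<in>UNIV. (u j \<bullet> v) *\<^sub>R u j) \<bullet> v" using onf_span[OF assms, of v] by simp
  also have "\<dots> = (\<Sum>j\<in>UNIV. (u j \<bullet> v)^2)" by (simp add: inner_sum_left power2_eq_square)
  finally show ?thesis .
qed

lemma clamp_props:
  fixes A :: "real^'d^'d"
  assumes psd: "psd A" and b: "\<beta> > 0"
  shows "\<beta> * (v \<bullet> v) \<le> mnorm_sq (clamp \<beta> A) v \<and> mnorm_sq A v \<le> mnorm_sq (clamp \<beta> A) v
     \<and> mnorm_sq (clamp \<beta> A) v \<le> mnorm_sq A v + \<beta> * (v \<bullet> v)"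
proof -
  have sym: "transpose A = A" using psd by (simp add: psd_def)
  obtain u0 lam0 where "orthonormal_family u0" "A = (\<Sum>j\<in>UNIV. lam0 j *\<^sub>R outer (u0 j))"
    using spectral[OF sym] by blast
  then have ex: "\<exists>B u lam. orthonormal_family u \<and> A = (\<Sum>j\<in>UNIV. lam j *\<^sub>R outer (u j)) \<and>
      B = (\<Sum>j\<in>UNIV. max (lam j) \<beta> *\<^sub>R outer (u j))" by blast
  have "\<exists>u lam. orthonormal_family u \<and> A = (\<Sum>j\<in>UNIV. lam j *\<^sub>R outer (u j)) \<and>
      clamp \<beta> A = (\<Sum>j\<in>UNIV. max (lam j) \<beta> *\<^sub>R outer (u j))"
    unfolding clamp_def by (rule someI_ex[OF ex])
  then obtain u lam where u: "orthonormal_family u" and A: "A = (\<Sum>j\<in>UNIV. lam j *\<^sub>R outer (u j))"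
     and B: "clamp \<beta> A = (\<Sum>j\<in>UNIV. max (lam j) \<beta> *\<^sub>R outer (u j))" by blast
  have lam: "lam j \<ge> 0" for j
  proof -
    have "mnorm_sq A (u j) = (\<Sum>i\<in>UNIV. lam i * (u i \<bullet> u j)^2)" by (simp only: A quad_form)
    also have "\<dots> = (\<Sum>i\<in>UNIV. if i = j then lam j else 0)"
      using u by (intro sum.cong) (auto simp: orthonormal_family_def)
    also have "\<dots> = lam j" by simp
    finally have "lam j = mnorm_sq A (u j)" by simp
    moreover have "0 \<le> mnorm_sq A (u j)" using psd by (simp add: psd_def mnorm_sq_def inner_commute)
    ultimately show ?thesis by simp
  qed
  have mB: "mnorm_sq (clamp \<beta> A) v = (\<Sum>j\<in>UNIV. max (lam j) \<beta> * (u j \<bullet> v)^2)" by (simp only: B quad_form)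
  have mA: "mnorm_sq A v = (\<Sum>j\<in>UNIV. lam j * (u j \<bullet> v)^2)" by (simp only: A quad_form)
  have vv: "\<beta> * (v \<bullet> v) = (\<Sum>j\<in>UNIV. \<beta> * (u j \<bullet> v)^2)" using parseval[OF u, of v] by (simp add: sum_distrib_left)
  have 1: "\<beta> * (v \<bullet> v) \<le> mnorm_sq (clamp \<beta> A) v"
    unfolding vv mB by (intro sum_mono mult_right_mono) auto
  have 2: "mnorm_sq A v \<le> mnorm_sq (clamp \<beta> A) v"
    unfolding mA mB by (intro sum_mono mult_right_mono) auto
  have "mnorm_sq (clamp \<beta> A) v \<le> (\<Sum>j\<in>UNIV. lam j * (u j \<bullet> v)^2 + \<beta> * (u j \<bullet> v)^2)"
    unfolding mB by (intro sum_mono) (use lam b in \<open>auto simp: distrib_right[symmetric] intro!: mult_right_mono\<close>)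
  also have "\<dots> = mnorm_sq A v + \<beta> * (v \<bullet> v)" unfolding mA vv by (simp add: sum.distrib)
  finally show ?thesis using 1 2 by blast
qed

lemma frob_bound:
  fixes M :: "real^'d^'d"
  shows "\<bar>mnorm_sq M v\<bar> \<le> frob_norm M * (v \<bullet> v)"
proof -
  have sq: "(norm (x::real^'d))^2 = (\<Sum>i\<in>UNIV. (x $ i)^2)" for x
  proof -
    have "(norm x)^2 = x \<bullet> x" by (rule power2_norm_eq_inner)
    also have "\<dots> = (\<Sum>i\<in>UNIV. (x $ i)^2)" by (simp add: inner_vec_def power2_eq_square)
    finally show ?thesis .
  qed
  have "(norm (M *v v))^2 = (\<Sum>i\<in>UNIV. ((M $ i) \<bullet> v)^2)" by (simp add: sq matrix_vector_mul_component)
  also have "\<dots> \<le> (\<Sum>i\<in>UNIV. (norm (M $ i))^2 * (norm v)^2)"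
  proof (intro sum_mono)
    fix i
    have "\<bar>(M $ i) \<bullet> v\<bar> \<le> norm (M $ i) * norm v" by (rule Cauchy_Schwarz_ineq2)
    then have "\<bar>(M $ i) \<bullet> v\<bar>^2 \<le> (norm (M $ i) * norm v)^2" by (intro power_mono) auto
    then show "((M $ i) \<bullet> v)^2 \<le> (norm (M $ i))^2 * (norm v)^2" by (simp add: power_mult_distrib)
  qed
  also have "\<dots> = (frob_norm M * norm v)^2"
    by (simp add: frob_norm_def sq power_mult_distrib sum_distrib_right sum_nonneg)
  finally have nb: "norm (M *v v) \<le> frob_norm M * norm v"
    by (rule power2_le_imp_le) (simp add: frob_norm_def sum_nonneg)
  have "\<bar>mnorm_sq M v\<bar> \<le> norm (M *v v) * norm v" unfolding mnorm_sq_def by (rule Cauchy_Schwarz_ineq2)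
  also have "\<dots> \<le> frob_norm M * norm v * norm v" by (rule mult_right_mono[OF nb]) simp
  also have "\<dots> = frob_norm M * (v \<bullet> v)" by (simp add: norm_eq_sqrt_inner)
  finally show ?thesis .
qed

theorem mainTheorem3:
  fixes \<Theta> :: "(real^'d) set" and A :: "real^'d \<Rightarrow> real^'d^'d" and L :: real
  assumes psdA: "\<forall>\<theta>\<in>\<Theta>. psd (A \<theta>)"
    and lip: "\<forall>\<theta>1\<in>\<Theta>. \<forall>\<theta>2\<in>\<Theta>. frob_norm (A \<theta>1 - A \<theta>2) \<le> L * norm (\<theta>1 - \<theta>2)"
  shows "\<forall>\<beta>>0. \<forall>v. \<forall>\<theta>1\<in>\<Theta>. \<forall>\<theta>2\<in>\<Theta>.
           mnorm_sq (clamp \<beta> (A \<theta>2)) v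
             \<le> (3 + L / \<beta> * norm (\<theta>1 - \<theta>2)) * mnorm_sq (clamp \<beta> (A \<theta>1)) v"
proof (intro allI impI ballI)
  fix \<beta> :: real and v :: "real^'d" and t1 t2
  assume b: "\<beta> > 0" and t1: "t1 \<in> \<Theta>" and t2: "t2 \<in> \<Theta>"
  define D where "D = L * norm (t1 - t2)"
  define b1 where "b1 = mnorm_sq (clamp \<beta> (A t1)) v"
  define b2 where "b2 = mnorm_sq (clamp \<beta> (A t2)) v"
  define a1 where "a1 = mnorm_sq (A t1) v"
  define a2 where "a2 = mnorm_sq (A t2) v"
  define n where "n = v \<bullet> v"
  have n0: "n \<ge> 0" by (simp add: n_def)
  have P1: "\<beta> * n \<le> b1 \<and> a1 \<le> b1" using clamp_props[OF _ b, of "A t1" v] psdA t1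
    by (auto simp: b1_def a1_def n_def)
  have P2: "b2 \<le> a2 + \<beta> * n" using clamp_props[OF _ b, of "A t2" v] psdA t2
    by (auto simp: b2_def a2_def n_def)
  have fb: "\<bar>mnorm_sq (A t1 - A t2) v\<bar> \<le> frob_norm (A t1 - A t2) * n"
    by (simp add: frob_bound n_def)
  have "mnorm_sq (A t1 - A t2) v = a1 - a2"
    by (simp add: a1_def a2_def mnorm_sq_def matrix_vector_mult_diff_rdistrib inner_diff_left)
  moreover have fr: "frob_norm (A t1 - A t2) \<le> D" using lip t1 t2 by (simp add: D_def)
  moreover have "frob_norm (A t1 - A t2) \<ge> 0" by (simp add: frob_norm_def sum_nonneg)
  ultimately have a21: "a2 \<le> a1 + D * n" and D0: "D \<ge> 0"
  proof -
    assume e: "mnorm_sq (A t1 - A t2) v = a1 - a2" and f1: "frob_norm (A t1 - A t2) \<le> D"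
       and f0: "0 \<le> frob_norm (A t1 - A t2)"
    have "frob_norm (A t1 - A t2) * n \<le> D * n" using f1 n0 by (rule mult_right_mono)
    then show "a2 \<le> a1 + D * n" using fb e by linarith
    show "D \<ge> 0" using f0 f1 by linarith
  qed
  have "b2 \<le> b1 + D * n + \<beta> * n" using P1 P2 a21 by linarith
  also have "D * n \<le> D / \<beta> * b1"
  proof -
    have "D * n = D / \<beta> * (\<beta> * n)" using b by simp
    also have "\<dots> \<le> D / \<beta> * b1" using P1 D0 b by (intro mult_left_mono) auto
    finally show ?thesis .
  qed
  then have "b1 + D * n + \<beta> * n \<le> b1 + D / \<beta> * b1 + b1" using P1 by linarith
  also have "\<dots> \<le> (3 + D / \<beta>) * b1"
  proof -
    have "0 \<le> \<beta> * n" using b n0 by simp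
    then have "b1 \<ge> 0" using P1 by linarith
    then show ?thesis by (simp add: algebra_simps)
  qed
  finally show "b2 \<le> (3 + L / \<beta> * norm (t1 - t2)) * b1" by (simp add: D_def)
qed

end
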